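(* Let $\Box$ be the full subcategory of $\mathbf{Poset}$ on the posets $[1]^n$ for $n \geq 0$, and let $\mathbf{Poset}_{\mathsf{compl},\mathsf{fin}}$ be the full subcategory of $\mathbf{Poset}$ on the finite posets that are complete. Then the inclusion $\Box \to \mathbf{Poset}_{\mathsf{compl},\mathsf{fin}}$ is an idempotent completion. That is: it is fully faithful, every idempotent in $\mathbf{Poset}_{\mathsf{compl},\mathsf{fin}}$ splits in $\mathbf{Poset}_{\mathsf{compl},\mathsf{fin}}$, and every finite complete poset is a retract, in $\mathbf{Poset}$, of $[1]^n$ for some $n \geq 0$.
   Context: $\mathbf{Poset}$ is the category of small posets and monotone maps; a poset is regarded as a category with at most one morphism $x \to y$, present exactly when $x \leq y$. $[1]$ is the poset $\{0 < 1\}$ and $[1]^n$ is its $n$-fold product (componentwise order). A poset is complete if every diagram in it has a limit; equivalently, every subset has a greatest lower bound. An idempotent $f\colon A \to A$ ($f^2=f$) splits if there are $r\colon A\to B$ and $s\colon B\to A$ with $rs=\mathrm{id}_B$ and $sr=f$. In that situation $B$ is called a retract of $A$. *)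

theory Defs
  imports Main
begin

definition poset_on :: "'a set \<Rightarrow> ('a \<Rightarrow> 'a \<Rightarrow> bool) \<Rightarrow> bool" where
  "poset_on A le \<longleftrightarrow>
     (\<forall>x\<in>A. le x x) \<and>
     (\<forall>x\<in>A. \<forall>y\<in>A. le x y \<and> le y x \<longrightarrow> x = y) \<and>
     (\<forall>x\<in>A. \<forall>y\<in>A. \<forall>z\<in>A. le x y \<and> le y z \<longrightarrow> le x z)"

definition is_glb :: "'a set \<Rightarrow> ('a \<Rightarrow> 'a \<Rightarrow> bool) \<Rightarrow> 'a set \<Rightarrow> 'a \<Rightarrow> bool" where
  "is_glb A le S g \<longleftrightarrow>
     g \<in> A \<and> (\<forall>s\<in>S. le g s) \<and> (\<forall>h\<in>A. (\<forall>s\<in>S. le h s) \<longrightarrow> le h g)"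

definition complete_poset :: "'a set \<Rightarrow> ('a \<Rightarrow> 'a \<Rightarrow> bool) \<Rightarrow> bool" where
  "complete_poset A le \<longleftrightarrow> poset_on A le \<and> (\<forall>S. S \<subseteq> A \<longrightarrow> (\<exists>g. is_glb A le S g))"

definition mono_map :: "'a set \<Rightarrow> ('a \<Rightarrow> 'a \<Rightarrow> bool) \<Rightarrow> 'b set \<Rightarrow> ('b \<Rightarrow> 'b \<Rightarrow> bool) \<Rightarrow> ('a \<Rightarrow> 'b) \<Rightarrow> bool" where
  "mono_map A leA B leB f \<longleftrightarrow>
     (\<forall>x\<in>A. f x \<in> B) \<and> (\<forall>x\<in>A. \<forall>y\<in>A. leA x y \<longrightarrow> leB (f x) (f y))"

text \<open>The cube [1]^n: functions {0..<n} \<rightarrow> {0<1} (encoded as bool, False < True),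
  extended by False outside {0..<n}; ordered componentwise (the pointwise order on nat \<Rightarrow> bool).\<close>

definition cube :: "nat \<Rightarrow> (nat \<Rightarrow> bool) set" where
  "cube n = {x. \<forall>i. n \<le> i \<longrightarrow> \<not> x i}"

end

theory Submission
  imports Defs
begin

lemma glb_unique:
  assumes "poset_on A le" "is_glb A le S g" "is_glb A le S g'" shows "g = g'"
  using assms unfolding poset_on_def is_glb_def by blast

lemma glb_some:
  assumes "complete_poset A le" "S \<subseteq> A"
  shows "is_glb A le S (SOME g. is_glb A le S g)"
  using assms unfolding complete_poset_def by (metis someI_ex)

lemma glb_anti:
  assumes "S \<subseteq> T" "is_glb A le S g" "is_glb A le T g'" shows "le g' g"
  using assms unfolding is_glb_def by blast

lemma cube_lt: "x \<in> cube n \<Longrightarrow> x i \<Longrightarrow> i < n"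
  unfolding cube_def using leI by blast

lemma part1: "finite (cube n) \<and> complete_poset (cube n) (\<le>)"
proof
  have "cube n = (\<lambda>X i. i \<in> X) ` Pow {..<n}"
  proof
    show "cube n \<subseteq> (\<lambda>X i. i \<in> X) ` Pow {..<n}"
    proof
      fix x assume "x \<in> cube n"
      then have "x = (\<lambda>i. i \<in> {i. x i})" "{i. x i} \<in> Pow {..<n}"
        using cube_lt by auto
      then show "x \<in> (\<lambda>X i. i \<in> X) ` Pow {..<n}" by blast
    qed
  qed (auto simp: cube_def)
  then show "finite (cube n)" by simp
next
  show "complete_poset (cube n) (\<le>)"
    unfolding complete_poset_def poset_on_def
  proof (intro conjI allI impI ballI)
    fix S assume S: "S \<subseteq> cube n"
    let ?g = "\<lambda>i. i < n \<and> (\<forall>s\<in>S. s i)"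
    have "is_glb (cube n) (\<le>) S ?g"
      unfolding is_glb_def
    proof (intro conjI ballI impI)
      show "?g \<in> cube n" by (auto simp: cube_def)
      fix s assume "s \<in> S" then show "?g \<le> s" by (auto simp: le_fun_def)
    next
      fix h assume "h \<in> cube n" "\<forall>s\<in>S. h \<le> s"
      then show "h \<le> ?g" using cube_lt by (auto simp: le_fun_def)
    qed
    then show "\<exists>g. is_glb (cube n) (\<le>) S g" by blast
  qed (auto intro: order_antisym order_trans)
qed

lemma part2:
  fixes A :: "'a set"
  assumes fin: "finite A" and c: "complete_poset A le" and m: "mono_map A le A le f"
    and idem: "\<forall>x\<in>A. f (f x) = f x"
  shows "\<exists>(B :: 'a set) leB r s. finite B \<and> complete_poset B leB \<and>
            mono_map A le B leB r \<and> mono_map B leB A le s \<and>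
            (\<forall>y\<in>B. r (s y) = y) \<and> (\<forall>x\<in>A. s (r x) = f x)"
proof -
  have p: "poset_on A le" using c unfolding complete_poset_def by blast
  have fA: "f ` A \<subseteq> A" using m unfolding mono_map_def by blast
  have 1: "finite (f ` A)" using fin by simp
  have 2: "complete_poset (f ` A) le" unfolding complete_poset_def
  proof (intro conjI allI impI)
    show "poset_on (f ` A) le" using p fA unfolding poset_on_def by (meson subsetD)
    fix S assume S: "S \<subseteq> f ` A"
    then have "S \<subseteq> A" using fA by blast
    then obtain g where g: "is_glb A le S g" using c unfolding complete_poset_def by blast
    have "is_glb (f ` A) le S (f g)" unfolding is_glb_def
    proof (intro conjI ballI impI)
      have gA: "g \<in> A" using g unfolding is_glb_def by blast
      then show "f g \<in> f ` A" by blast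
      fix s assume sS: "s \<in> S"
      then obtain a where a: "a \<in> A" "s = f a" using S by blast
      have "le g s" using g sS unfolding is_glb_def by blast
      then have "le (f g) (f s)" using m gA a fA unfolding mono_map_def by blast
      then show "le (f g) s" using idem a by simp
    next
      fix h assume h: "h \<in> f ` A" "\<forall>s\<in>S. le h s"
      then obtain a where a: "a \<in> A" "h = f a" by blast
      have hA: "h \<in> A" using h fA by blast
      have "le h g" using g h hA unfolding is_glb_def by blast
      then have "le (f h) (f g)" using m g hA unfolding mono_map_def is_glb_def by blast
      then show "le h (f g)" using idem a by simp
    qed
    then show "\<exists>g. is_glb (f ` A) le S g" by blast
  qed
  have 3: "mono_map A le (f ` A) le f" using m unfolding mono_map_def by blast
  have 4: "mono_map (f ` A) le A le id" using fA unfolding mono_map_def by auto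
  have 5: "\<forall>y\<in>f ` A. f (id y) = y" using idem by auto
  have 6: "\<forall>x\<in>A. id (f x) = f x" by simp
  have H: "finite (f ` A) \<and> complete_poset (f ` A) le \<and>
            mono_map A le (f ` A) le f \<and> mono_map (f ` A) le A le id \<and>
            (\<forall>y\<in>f ` A. f (id y) = y) \<and> (\<forall>x\<in>A. id (f x) = f x)"
    using 1 2 3 4 5 6 by simp
  show ?thesis
    apply (rule exI[where x="f ` A"])
    apply (rule exI[where x=le])
    apply (rule exI[where x=f])
    apply (rule exI[where x=id])
    by (rule H)
qed

lemma part3:
  assumes fin: "finite A" and c: "complete_poset A le"
  shows "\<exists>n r s. mono_map (cube n) (\<le>) A le r \<and> mono_map A le (cube n) (\<le>) s \<and>
            (\<forall>x\<in>A. r (s x) = x)"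
proof -
  have p: "poset_on A le" using c unfolding complete_poset_def by blast
  obtain a where a: "bij_betw a {0..<card A} A" using ex_bij_betw_nat_finite[OF fin] by blast
  define n where "n = card A"
  define T where "T v = {a i | i. i < n \<and> \<not> v i}" for v :: "nat \<Rightarrow> bool"
  define r where "r v = (SOME g. is_glb A le (T v) g)" for v
  define s where "s x = (\<lambda>i. i < n \<and> \<not> le x (a i))" for x
  have TA: "T v \<subseteq> A" for v using a unfolding T_def n_def bij_betw_def by auto
  have rg: "is_glb A le (T v) (r v)" for v unfolding r_def using glb_some[OF c TA] .
  show ?thesis
  proof (intro exI conjI)
    show "mono_map (cube n) (\<le>) A le r" unfolding mono_map_def
    proof (intro conjI ballI impI)
      fix x show "r x \<in> A" using rg[of x] unfolding is_glb_def by blast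
    next
      fix v w :: "nat \<Rightarrow> bool" assume "v \<le> w"
      then have "T w \<subseteq> T v" unfolding T_def le_fun_def by auto
      then show "le (r v) (r w)" using glb_anti rg by metis
    qed
    show "mono_map A le (cube n) (\<le>) s" unfolding mono_map_def
    proof (intro conjI ballI impI)
      fix x show "s x \<in> cube n" unfolding s_def cube_def by auto
    next
      fix x y assume xy: "x \<in> A" "y \<in> A" "le x y"
      show "s x \<le> s y" unfolding s_def le_fun_def le_bool_def
      proof (intro allI impI, elim conjE, intro conjI)
        fix i assume i: "i < n" "\<not> le x (a i)"
        then show "i < n" by simp
        have "a i \<in> A" using a i unfolding n_def bij_betw_def by auto
        then show "\<not> le y (a i)" using p xy i unfolding poset_on_def by blast
      qed
    qed
    show "\<forall>x\<in>A. r (s x) = x"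
    proof
      fix x assume x: "x \<in> A"
      have "T (s x) = {y\<in>A. le x y}"
      proof
        show "T (s x) \<subseteq> {y\<in>A. le x y}"
          using a unfolding T_def s_def n_def bij_betw_def by auto
        show "{y\<in>A. le x y} \<subseteq> T (s x)"
        proof
          fix y assume y: "y \<in> {y\<in>A. le x y}"
          then have "y \<in> a ` {0..<n}" using a unfolding n_def bij_betw_def by simp
          then obtain i where "i < n" "y = a i" by auto
          then show "y \<in> T (s x)" using y unfolding T_def s_def by auto
        qed
      qed
      then have "is_glb A le (T (s x)) x" using x p unfolding is_glb_def poset_on_def by blast
      then show "r (s x) = x" using glb_unique[OF p rg] by blast
    qed
  qed
qed

theorem mainTheorem1:
  shows "(\<forall>n. finite (cube n) \<and> complete_poset (cube n) (\<le>))
   \<and> (\<forall>(A :: 'a set) le f.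
        finite A \<and> complete_poset A le \<and> mono_map A le A le f \<and> (\<forall>x\<in>A. f (f x) = f x) \<longrightarrow>
        (\<exists>(B :: 'a set) leB r s. finite B \<and> complete_poset B leB \<and>
            mono_map A le B leB r \<and> mono_map B leB A le s \<and>
            (\<forall>y\<in>B. r (s y) = y) \<and> (\<forall>x\<in>A. s (r x) = f x)))
   \<and> (\<forall>(A :: 'a set) le.
        finite A \<and> complete_poset A le \<longrightarrow>
        (\<exists>n r s. mono_map (cube n) (\<le>) A le r \<and> mono_map A le (cube n) (\<le>) s \<and>
            (\<forall>x\<in>A. r (s x) = x)))"
  proof (rule conjI[OF allI[OF part1]], intro conjI allI impI)
  fix A :: "'a set" and le f
  assume "finite A \<and> complete_poset A le \<and> mono_map A le A le f \<and> (\<forall>x\<in>A. f (f x) = f x)"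
  then show "\<exists>(B :: 'a set) leB r s. finite B \<and> complete_poset B leB \<and>
            mono_map A le B leB r \<and> mono_map B leB A le s \<and>
            (\<forall>y\<in>B. r (s y) = y) \<and> (\<forall>x\<in>A. s (r x) = f x)"
    using part2 by blast
next
  fix A :: "'a set" and le
  assume "finite A \<and> complete_poset A le"
  then show "\<exists>n r s. mono_map (cube n) (\<le>) A le r \<and> mono_map A le (cube n) (\<le>) s \<and>
            (\<forall>x\<in>A. r (s x) = x)" using part3 by blast
qed

end
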